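(* Let $X,Y$ be Tychonoff spaces and $f:X\to Y$ a meshing map, and let $f_\beta:\beta X\to\beta Y$ be the continuous extension of $f$. Then for any two distinct points $x_1,x_2\in N(X)$ with $f(x_1)=f(x_2)$ there exist neighbourhoods $U_1$ of $x_1$ and $U_2$ of $x_2$ in $\beta X$ such that $f_\beta(U_1)\cap f_\beta(U_2)$ is a compact subset of $Y$.
   Context: $\beta X$ denotes the Stone–Čech compactification. A space $X$ is Menger if for each sequence $(\mathcal{U}_n)$ of open covers of $X$ there is a sequence $(\mathcal{V}_n)$ with each $\mathcal{V}_n$ a finite subset of $\mathcal{U}_n$ and $\bigcup_{n}\bigcup\mathcal{V}_n=X$. $X$ is locally Menger at $x$ if there are an open set $U$ and a Menger subspace $M$ of $X$ with $x\in U\subseteq M$; $N(X)$ denotes the set of points of $X$ at which $X$ is not locally Menger. A continuous surjection $f:X\to Y$ is a meshing map if there are compactifications $bX$ of $X$ and $cY$ of $Y$ and a continuous extension $\tilde f:bX\to cY$ of $f$ onto $cY$ such that $\tilde f|_{bX\setminus X}$ is a homeomorphism onto $cY\setminus Y$. *)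

theory Defs
  imports "HOL-Analysis.Analysis"
begin

definition tychonoff_space :: "'a topology \<Rightarrow> bool" where
  "tychonoff_space X \<longleftrightarrow> completely_regular_space X \<and> Hausdorff_space X"

definition compactification :: "'a topology \<Rightarrow> 'b topology \<Rightarrow> ('a \<Rightarrow> 'b) \<Rightarrow> bool" where
  "compactification X bX e \<longleftrightarrow>
     compact_space bX \<and> Hausdorff_space bX \<and> embedding_map X bX e \<and>
     bX closure_of (e ` topspace X) = topspace bX"

definition stone_cech :: "'a topology \<Rightarrow> 'b topology \<Rightarrow> ('a \<Rightarrow> 'b) \<Rightarrow> bool" where
  "stone_cech X bX e \<longleftrightarrow> compactification X bX e \<and>
     (\<forall>g. continuous_map X (subtopology euclideanreal {0..1}) g \<longrightarrow>
        (\<exists>h. continuous_map bX (subtopology euclideanreal {0..1}) h \<and>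
             (\<forall>x\<in>topspace X. h (e x) = g x)))"

definition meshing_witness ::
  "'a topology \<Rightarrow> 'b topology \<Rightarrow> ('a \<Rightarrow> 'b) \<Rightarrow> 'c topology \<Rightarrow> ('a \<Rightarrow> 'c) \<Rightarrow>
   'd topology \<Rightarrow> ('b \<Rightarrow> 'd) \<Rightarrow> ('c \<Rightarrow> 'd) \<Rightarrow> bool" where
  "meshing_witness X Y f bX eb cY ec g \<longleftrightarrow>
     continuous_map X Y f \<and> f ` topspace X = topspace Y \<and>
     compactification X bX eb \<and> compactification Y cY ec \<and>
     continuous_map bX cY g \<and> g ` topspace bX = topspace cY \<and>
     (\<forall>x\<in>topspace X. g (eb x) = ec (f x)) \<and>
     homeomorphic_map (subtopology bX (topspace bX - eb ` topspace X))
                      (subtopology cY (topspace cY - ec ` topspace Y)) g"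

definition menger_space :: "'a topology \<Rightarrow> bool" where
  "menger_space X \<longleftrightarrow>
     (\<forall>\<U> :: nat \<Rightarrow> 'a set set.
        (\<forall>n. (\<forall>U\<in>\<U> n. openin X U) \<and> \<Union>(\<U> n) = topspace X) \<longrightarrow>
        (\<exists>\<V>. (\<forall>n. finite (\<V> n) \<and> \<V> n \<subseteq> \<U> n) \<and> (\<Union>n. \<Union>(\<V> n)) = topspace X))"

definition locally_menger_at :: "'a topology \<Rightarrow> 'a \<Rightarrow> bool" where
  "locally_menger_at X x \<longleftrightarrow>
     (\<exists>U M. openin X U \<and> x \<in> U \<and> U \<subseteq> M \<and> M \<subseteq> topspace X \<and>
            menger_space (subtopology X M))"

definition non_locally_menger :: "'a topology \<Rightarrow> 'a set" where
  "non_locally_menger X = {x \<in> topspace X. \<not> locally_menger_at X x}"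

definition neighbourhood_of :: "'a topology \<Rightarrow> 'a \<Rightarrow> 'a set \<Rightarrow> bool" where
  "neighbourhood_of X x N \<longleftrightarrow> (\<exists>V. openin X V \<and> x \<in> V \<and> V \<subseteq> N \<and> N \<subseteq> topspace X)"

end

theory Submission
  imports Defs
begin

lemma emb_cont: "embedding_map X Y f \<Longrightarrow> continuous_map X Y f"
  unfolding embedding_map_def
  using continuous_map_in_subtopology homeomorphic_imp_continuous_map by blast

lemma sc_extend:
  fixes K :: "'k topology"
  assumes sc: "stone_cech X BX eX" and K: "compact_space K" "Hausdorff_space K"
    and u: "continuous_map X K u"
  obtains k where "continuous_map BX K k" "\<And>x. x \<in> topspace X \<Longrightarrow> k (eX x) = u x"
proof -
  have crK: "completely_regular_space K"
    using K normal_imp_completely_regular_space compact_Hausdorff_or_regular_imp_normal_space by blast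
  obtain I :: "('k \<Rightarrow> real) set" and e where emb: "embedding_map K (product_topology (\<lambda>f. top_of_set {0..1::real}) I) e"
    using completely_regular_space_cube_embedding[OF crK K(2)] by metis
  define P where "P = product_topology (\<lambda>f. top_of_set {0..1::real}) I"
  have ce: "continuous_map K P e"
    using emb emb_cont P_def by blast
  have "\<forall>i\<in>I. \<exists>h. continuous_map BX (top_of_set {0..1}) h \<and> (\<forall>x\<in>topspace X. h (eX x) = e (u x) i)"
  proof
    fix i assume i: "i \<in> I"
    have "continuous_map X (top_of_set {0..1}) (\<lambda>x. e (u x) i)"
      using continuous_map_compose[OF continuous_map_compose[OF u ce] continuous_map_product_projection[OF i, of "\<lambda>f. top_of_set {0..1::real}", folded P_def]]
      by (simp add: P_def o_def)
    then show "\<exists>h. continuous_map BX (top_of_set {0..1}) h \<and> (\<forall>x\<in>topspace X. h (eX x) = e (u x) i)"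
      using sc unfolding stone_cech_def by blast
  qed
  then obtain hh where hh0: "\<forall>i\<in>I. continuous_map BX (top_of_set {0..1}) (hh i) \<and> (\<forall>x\<in>topspace X. hh i (eX x) = e (u x) i)"
    by (rule bchoice[elim_format]) blast
  then have hh: "\<And>i. i \<in> I \<Longrightarrow> continuous_map BX (top_of_set {0..1}) (hh i)"
    "\<And>i x. i \<in> I \<Longrightarrow> x \<in> topspace X \<Longrightarrow> hh i (eX x) = e (u x) i"
    by auto
  define H where "H p = (\<lambda>i\<in>I. hh i p)" for p
  have cH: "continuous_map BX P H"
    unfolding P_def H_def by (auto simp: continuous_map_componentwise hh(1))
  have HeX: "H (eX x) = e (u x)" if x: "x \<in> topspace X" for x
  proof -
    have "e (u x) \<in> topspace P"
      using ce u x by (metis continuous_map_image_subset_topspace image_subset_iff)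
    then have "e (u x) \<in> extensional I" by (simp add: P_def PiE_def)
    then show ?thesis unfolding H_def using hh(2)[OF _ x]
      by (auto simp: extensional_def)
  qed
  have HP: "Hausdorff_space P"
    unfolding P_def by (simp add: Hausdorff_space_product_topology Hausdorff_space_subtopology)
  have clo: "closedin P (e ` topspace K)"
    using compactin_imp_closedin[OF HP image_compactin[OF _ ce]] K(1) compact_space_def by blast
  have comp: "compactification X BX eX" using sc stone_cech_def by blast
  then have tBX: "topspace BX = BX closure_of (eX ` topspace X)" unfolding compactification_def by simp
  have "H ` topspace BX \<subseteq> P closure_of (H ` eX ` topspace X)"
    using continuous_map_image_closure_subset[OF cH] tBX by metis
  also have "H ` eX ` topspace X \<subseteq> e ` topspace K"
    using HeX u by (force simp: continuous_map_def)
  then have "P closure_of (H ` eX ` topspace X) \<subseteq> e ` topspace K"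
    using clo by (meson closure_of_minimal)
  finally have Hsub: "H ` topspace BX \<subseteq> e ` topspace K" .
  obtain e' where e': "homeomorphic_maps K (subtopology P (e ` topspace K)) e e'"
    using emb unfolding embedding_map_def P_def homeomorphic_map_maps by blast
  have cH': "continuous_map BX (subtopology P (e ` topspace K)) H"
    using cH Hsub by (simp add: continuous_map_in_subtopology image_subset_iff_funcset)
  show ?thesis
  proof
    show "continuous_map BX K (e' \<circ> H)"
      using continuous_map_compose[OF cH'] e' unfolding homeomorphic_maps_def by blast
    show "(e' \<circ> H) (eX x) = u x" if "x \<in> topspace X" for x
    proof -
      have "u x \<in> topspace K" using u that by (metis continuous_map_image_subset_topspace image_subset_iff)
      then show ?thesis using e' that HeX unfolding homeomorphic_maps_def by simp
    qed
  qed
qed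


lemma remainder_pre:
  assumes sc: "stone_cech Y BY eY" and cc: "compactification Y cY ec"
    and k: "continuous_map BY cY k" and kc: "\<And>y. y \<in> topspace Y \<Longrightarrow> k (eY y) = ec y"
    and q: "q \<in> topspace BY" and y: "y \<in> topspace Y" and kq: "k q = ec y"
  shows "q = eY y"
proof (rule ccontr)
  assume ne: "q \<noteq> eY y"
  have comp: "compactification Y BY eY" using sc stone_cech_def by blast
  then have HB: "Hausdorff_space BY" and embY: "embedding_map Y BY eY"
    and dense: "BY closure_of (eY ` topspace Y) = topspace BY"
    unfolding compactification_def by auto
  have eYc: "continuous_map Y BY eY" using embY emb_cont by blast
  have eyin: "eY y \<in> topspace BY" using eYc y by (metis continuous_map_image_subset_topspace image_subset_iff)
  have "\<exists>U V. openin BY U \<and> openin BY V \<and> eY y \<in> U \<and> q \<in> V \<and> disjnt U V"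
    using HB ne q eyin unfolding Hausdorff_space_def by blast
  then obtain A B where A: "openin BY A" and B: "openin BY B" and "eY y \<in> A" "q \<in> B" and dAB: "disjnt A B"
    by blast
  define A' where "A' = {z \<in> topspace Y. eY z \<in> A}"
  have A'o: "openin Y A'" unfolding A'_def using openin_continuous_map_preimage[OF eYc A] .
  have yA': "y \<in> A'" using y \<open>eY y \<in> A\<close> A'_def by blast
  have embc: "embedding_map Y cY ec" using cc compactification_def by blast
  then have hm: "homeomorphic_map Y (subtopology cY (ec ` topspace Y)) ec" unfolding embedding_map_def .
  have "openin (subtopology cY (ec ` topspace Y)) (ec ` A')"
    using homeomorphic_map_openness[OF hm, of A'] A'o A'_def by auto
  then obtain G where G: "openin cY G" and GA: "ec ` A' = G \<inter> ec ` topspace Y"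
    unfolding openin_subtopology by blast
  have "k q \<in> G" using kq GA yA' y by blast
  define B' where "B' = B \<inter> {p \<in> topspace BY. k p \<in> G}"
  have B'o: "openin BY B'" unfolding B'_def using B openin_continuous_map_preimage[OF k G] by blast
  have "q \<in> B'" using \<open>k q \<in> G\<close> \<open>q \<in> B\<close> q B'_def by blast
  moreover have "q \<in> BY closure_of (eY ` topspace Y)" using dense q by simp
  ultimately have "\<exists>w\<in>eY ` topspace Y. w \<in> B'" using B'o unfolding in_closure_of by blast
  then obtain z where z: "z \<in> topspace Y" "eY z \<in> B'" by blast
  then have "ec z \<in> G \<inter> ec ` topspace Y" using kc B'_def by auto
  then obtain a where a: "a \<in> A'" "ec z = ec a" using GA by (metis imageE)
  have "inj_on ec (topspace Y)" using hm homeomorphic_imp_injective_map by blast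
  then have "z = a" using a z A'_def by (auto dest: inj_onD)
  then have "eY z \<in> A" using a A'_def by auto
  then show False using z dAB B'_def by (auto simp: disjnt_def)
qed


theorem theorem5p22:
  fixes X :: "'a topology" and Y :: "'b topology" and f :: "'a \<Rightarrow> 'b"
    and bX :: "'c topology" and eb :: "'a \<Rightarrow> 'c"
    and cY :: "'d topology" and ec :: "'b \<Rightarrow> 'd" and g :: "'c \<Rightarrow> 'd"
    and BX :: "'e topology" and eX :: "'a \<Rightarrow> 'e"
    and BY :: "'f topology" and eY :: "'b \<Rightarrow> 'f"
    and fb :: "'e \<Rightarrow> 'f"
  assumes "tychonoff_space X" and "tychonoff_space Y"
    and "meshing_witness X Y f bX eb cY ec g"
    and "stone_cech X BX eX" and "stone_cech Y BY eY"
    and "continuous_map BX BY fb"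
    and "\<forall>x\<in>topspace X. fb (eX x) = eY (f x)"
    and "x1 \<in> non_locally_menger X" and "x2 \<in> non_locally_menger X"
    and "x1 \<noteq> x2" and "f x1 = f x2"
  shows "\<exists>U1 U2 K. neighbourhood_of BX (eX x1) U1 \<and> neighbourhood_of BX (eX x2) U2 \<and>
           compactin Y K \<and> fb ` U1 \<inter> fb ` U2 = eY ` K"
proof -
  note mw = assms(3)[unfolded meshing_witness_def]
  have fc: "continuous_map X Y f" and cbX: "compactification X bX eb" and ccY: "compactification Y cY ec"
    and gc: "continuous_map bX cY g" and gcomm: "\<And>x. x \<in> topspace X \<Longrightarrow> g (eb x) = ec (f x)"
    and ghom: "homeomorphic_map (subtopology bX (topspace bX - eb ` topspace X))
                      (subtopology cY (topspace cY - ec ` topspace Y)) g"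
    using mw by auto
  have x12: "x1 \<in> topspace X" "x2 \<in> topspace X"
    using assms(8,9) unfolding non_locally_menger_def by auto
  have cpbX: "compact_space bX" and HbX: "Hausdorff_space bX" and embX: "embedding_map X bX eb"
    using cbX unfolding compactification_def by auto
  have ebc: "continuous_map X bX eb" using embX emb_cont by blast
  have "inj_on eb (topspace X)"
    using embX unfolding embedding_map_def using homeomorphic_imp_injective_map by blast
  then have ne: "eb x1 \<noteq> eb x2" using x12 assms(10) by (auto dest: inj_onD)
  have eb12: "eb x1 \<in> topspace bX" "eb x2 \<in> topspace bX"
    using ebc x12 by (metis continuous_map_image_subset_topspace image_subset_iff)+
  have "\<exists>U V. openin bX U \<and> openin bX V \<and> eb x1 \<in> U \<and> eb x2 \<in> V \<and> disjnt U V"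
    using HbX ne eb12 unfolding Hausdorff_space_def by blast
  then obtain W1 W2 where W: "openin bX W1" "openin bX W2" "eb x1 \<in> W1" "eb x2 \<in> W2" "disjnt W1 W2"
    by blast
  have "neighbourhood_base_of (closedin bX) bX"
    using neighbourhood_base_of_closedin compact_Hausdorff_imp_regular_space cpbX HbX by blast
  then have nb: "\<And>W x. openin bX W \<Longrightarrow> x \<in> W \<Longrightarrow> \<exists>U V. openin bX U \<and> closedin bX V \<and> x \<in> U \<and> U \<subseteq> V \<and> V \<subseteq> W"
    unfolding neighbourhood_base_of by blast
  obtain O1 V1 where OV1: "openin bX O1" "closedin bX V1" "eb x1 \<in> O1" "O1 \<subseteq> V1" "V1 \<subseteq> W1"
    using nb[OF W(1) W(3)] by blast
  obtain O2 V2 where OV2: "openin bX O2" "closedin bX V2" "eb x2 \<in> O2" "O2 \<subseteq> V2" "V2 \<subseteq> W2"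
    using nb[OF W(2) W(4)] by blast
  have key: "g ` V1 \<inter> g ` V2 \<subseteq> ec ` topspace Y"
  proof
    fix c assume c: "c \<in> g ` V1 \<inter> g ` V2"
    show "c \<in> ec ` topspace Y"
    proof (rule ccontr)
      assume nc: "c \<notin> ec ` topspace Y"
      obtain p1 p2 where p: "p1 \<in> V1" "p2 \<in> V2" "g p1 = c" "g p2 = c" using c by (metis IntE imageE)
      have pt: "p1 \<in> topspace bX" "p2 \<in> topspace bX"
        using p OV1(2) OV2(2) closedin_subset by blast+
      have "p1 \<notin> eb ` topspace X"
      proof
        assume "p1 \<in> eb ` topspace X"
        then obtain x where "x \<in> topspace X" "p1 = eb x" by blast
        then have "c = ec (f x)" using gcomm p by simp
        moreover have "f x \<in> topspace Y" using fc \<open>x \<in> topspace X\<close>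
          by (metis continuous_map_image_subset_topspace image_subset_iff)
        ultimately show False using nc by blast
      qed
      moreover have "p2 \<notin> eb ` topspace X"
      proof
        assume "p2 \<in> eb ` topspace X"
        then obtain x where "x \<in> topspace X" "p2 = eb x" by blast
        then have "c = ec (f x)" using gcomm p by simp
        moreover have "f x \<in> topspace Y" using fc \<open>x \<in> topspace X\<close>
          by (metis continuous_map_image_subset_topspace image_subset_iff)
        ultimately show False using nc by blast
      qed
      moreover have "inj_on g (topspace bX - eb ` topspace X)"
        using homeomorphic_imp_injective_map[OF ghom] by (simp add: Int_absorb1)
      ultimately have "p1 = p2" using pt p inj_onD[of g "topspace bX - eb ` topspace X" p1 p2] by (metis DiffI)
      then have "p1 \<in> W1 \<inter> W2" using p OV1(5) OV2(5) by blast
      then show False using W(5) unfolding disjnt_def by blast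
    qed
  qed
  obtain h where hc: "continuous_map BX bX h" and he: "\<And>x. x \<in> topspace X \<Longrightarrow> h (eX x) = eb x"
    using sc_extend[OF assms(4) cpbX HbX ebc] by blast
  have cpcY: "compact_space cY" and HcY: "Hausdorff_space cY" and embY: "embedding_map Y cY ec"
    using ccY unfolding compactification_def by auto
  have ecc: "continuous_map Y cY ec" using embY emb_cont by blast
  obtain k where kc: "continuous_map BY cY k" and ke: "\<And>y. y \<in> topspace Y \<Longrightarrow> k (eY y) = ec y"
    using sc_extend[OF assms(5) cpcY HcY ecc] by blast
  have cBX: "compactification X BX eX" using assms(4) stone_cech_def by blast
  have cBY: "compactification Y BY eY" using assms(5) stone_cech_def by blast
  have denseX: "BX closure_of (eX ` topspace X) = topspace BX" and cpBX: "compact_space BX"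
    and embBX: "embedding_map X BX eX"
    using cBX unfolding compactification_def by auto
  have HBY: "Hausdorff_space BY" using cBY unfolding compactification_def by auto
  have eXc: "continuous_map X BX eX" using embBX emb_cont by blast
  have comm: "k (fb p) = g (h p)" if p: "p \<in> topspace BX" for p
  proof -
    have "(k \<circ> fb) p = (g \<circ> h) p"
    proof (rule forall_in_closure_of_eq[where X=BX and Y=cY and S="eX ` topspace X"])
      show "p \<in> BX closure_of eX ` topspace X" using p denseX by simp
      show "Hausdorff_space cY" by (rule HcY)
      show "continuous_map BX cY (k \<circ> fb)" using continuous_map_compose[OF assms(6) kc] .
      show "continuous_map BX cY (g \<circ> h)" using continuous_map_compose[OF hc gc] .
      fix w assume "w \<in> eX ` topspace X"
      then obtain x where x: "x \<in> topspace X" "w = eX x" by blast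
      have "f x \<in> topspace Y" using fc x
        by (metis continuous_map_image_subset_topspace image_subset_iff)
      then show "(k \<circ> fb) w = (g \<circ> h) w" using x assms(7) ke he gcomm by simp
    qed
    then show ?thesis by simp
  qed
  define U1 where "U1 = {p \<in> topspace BX. h p \<in> V1}"
  define U2 where "U2 = {p \<in> topspace BX. h p \<in> V2}"
  have U1c: "closedin BX U1" unfolding U1_def using closedin_continuous_map_preimage[OF hc OV1(2)] .
  have U2c: "closedin BX U2" unfolding U2_def using closedin_continuous_map_preimage[OF hc OV2(2)] .
  have eX12: "eX x1 \<in> topspace BX" "eX x2 \<in> topspace BX"
    using eXc x12 by (metis continuous_map_image_subset_topspace image_subset_iff)+
  have N1: "neighbourhood_of BX (eX x1) U1"
    unfolding neighbourhood_of_def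
  proof (intro exI conjI)
    show "openin BX {p \<in> topspace BX. h p \<in> O1}" using openin_continuous_map_preimage[OF hc OV1(1)] .
    show "eX x1 \<in> {p \<in> topspace BX. h p \<in> O1}" using eX12 he x12 OV1 by simp
    show "{p \<in> topspace BX. h p \<in> O1} \<subseteq> U1" using OV1 U1_def by blast
    show "U1 \<subseteq> topspace BX" using U1_def by blast
  qed
  have N2: "neighbourhood_of BX (eX x2) U2"
    unfolding neighbourhood_of_def
  proof (intro exI conjI)
    show "openin BX {p \<in> topspace BX. h p \<in> O2}" using openin_continuous_map_preimage[OF hc OV2(1)] .
    show "eX x2 \<in> {p \<in> topspace BX. h p \<in> O2}" using eX12 he x12 OV2 by simp
    show "{p \<in> topspace BX. h p \<in> O2} \<subseteq> U2" using OV2 U2_def by blast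
    show "U2 \<subseteq> topspace BX" using U2_def by blast
  qed
  define S where "S = fb ` U1 \<inter> fb ` U2"
  have Sc: "compactin BY S" unfolding S_def
    using compactin_Int[OF HBY image_compactin[OF closedin_compact_space[OF cpBX U1c] assms(6)]
        image_compactin[OF closedin_compact_space[OF cpBX U2c] assms(6)]] .
  have Ssub: "S \<subseteq> eY ` topspace Y"
  proof
    fix q assume "q \<in> S"
    then obtain p1 p2 where p: "p1 \<in> U1" "p2 \<in> U2" "q = fb p1" "q = fb p2" unfolding S_def by blast
    have pp: "p1 \<in> topspace BX" "h p1 \<in> V1" "p2 \<in> topspace BX" "h p2 \<in> V2" using p U1_def U2_def by auto
    have "k q = g (h p1)" using comm[OF pp(1)] p(3) by simp
    moreover have "k q = g (h p2)" using comm[OF pp(3)] p(4) by simp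
    ultimately have "k q \<in> g ` V1 \<inter> g ` V2" using pp by blast
    then obtain y where y: "y \<in> topspace Y" "k q = ec y" using key by blast
    have "p1 \<in> topspace BX" using p U1_def by blast
    then have "q \<in> topspace BY" using p assms(6)
      by (metis continuous_map_image_subset_topspace image_subset_iff)
    then have "q = eY y" using remainder_pre[OF assms(5) ccY kc ke _ y] by blast
    then show "q \<in> eY ` topspace Y" using y by blast
  qed
  define K where "K = {y \<in> topspace Y. eY y \<in> S}"
  have SK: "S = eY ` K" using Ssub K_def by blast
  have hmY: "homeomorphic_map Y (subtopology BY (eY ` topspace Y)) eY"
    using cBY unfolding compactification_def embedding_map_def by blast
  have "compactin (subtopology BY (eY ` topspace Y)) (eY ` K)"
    using Sc Ssub unfolding SK[symmetric] compactin_subtopology by blast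
  then have "compactin Y K"
    using homeomorphic_map_compactness[OF hmY, of K] K_def by blast
  then show ?thesis using N1 N2 SK unfolding S_def by blast
qed

end
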